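(* Let $A=(A_1,A_2)\in\mathbb{N}^2$ with $\gcd(A_1,A_2)=1$, let $s\ge 2$, and let $$p(x,y)=\sum_{i=1}^s a_i x^{\alpha_i}y^{\beta_i},$$ where $a_i\neq 0$, $\alpha_i,\beta_i\in\mathbb{N}\cup\{0\}$, $A_1\alpha_i+A_2\beta_i=B$ for all $i=1,\dots,s$ with a common $B\in\mathbb{N}$, and $\alpha_1>\alpha_2>\dots>\alpha_s\ge 0$. Put $\nu_i=(\alpha_1-\alpha_i)/A_2$ (these are nonnegative integers) and $g(u)=\sum_{i=1}^s a_i u^{\nu_i}$. Then $p(x,y)\ge 0$ for all $(x,y)\in\mathbb{R}^2$ if and only if both of the following hold: (1) $a_1>0$, $a_s>0$, and $\alpha_1,\beta_1,\alpha_s,\beta_s$ are even nonnegative integers; (2) the polynomial $g$ is nonnegative on $\mathbb{R}$, i.e. either $g$ has no real roots or all its real roots have even multiplicity.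
   Context: $\mathbb{N}=\{1,2,\dots\}$. The polynomial $g$ is called the characteristic polynomial of the form $p$; for $x\neq 0$ one has $p(x,y)=x^{\alpha_1}y^{\beta_1}g(x^{-A_2}y^{A_1})$. *)

theory Defs
  imports "HOL-Computational_Algebra.Polynomial"
begin

definition form_eval :: "nat \<Rightarrow> (nat \<Rightarrow> real) \<Rightarrow> (nat \<Rightarrow> nat) \<Rightarrow> (nat \<Rightarrow> nat) \<Rightarrow> real \<Rightarrow> real \<Rightarrow> real" where
  "form_eval s a \<alpha> \<beta> x y = (\<Sum>i=1..s. a i * x ^ \<alpha> i * y ^ \<beta> i)"

definition char_exp :: "nat \<Rightarrow> (nat \<Rightarrow> nat) \<Rightarrow> nat \<Rightarrow> nat" where
  "char_exp A2 \<alpha> i = (\<alpha> 1 - \<alpha> i) div A2"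

definition char_poly :: "nat \<Rightarrow> nat \<Rightarrow> (nat \<Rightarrow> real) \<Rightarrow> (nat \<Rightarrow> nat) \<Rightarrow> real poly" where
  "char_poly A2 s a \<alpha> = (\<Sum>i=1..s. monom (a i) (char_exp A2 \<alpha> i))"

end

theory Submission
  imports Defs
begin

lemma T: fixes x y :: real
  assumes "a = b + P*n" "d = c + Q*n" "x \<noteq> 0"
  shows "x^b * y^d = x^a * y^c * (y^Q / x^P)^n"
proof -
  have "x^a * y^c * (y^Q / x^P)^n = x^b * x^(P*n) * y^c * (y^(Q*n) / x^(P*n))"
    using assms(1) by (simp add: power_add power_mult power_divide)
  also have "\<dots> = x^b * (y^c * y^(Q*n))" using assms(3) by simp
  also have "\<dots> = x^b * y^d" using assms(2) by (simp add: power_add)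
  finally show ?thesis by simp
qed

lemma SL: fixes k :: "real \<Rightarrow> real"
  assumes "isCont k 0" "k 0 \<noteq> 0" "\<And>x. x \<noteq> 0 \<Longrightarrow> x^e * k x \<ge> 0"
  shows "k 0 > 0 \<and> even e"
proof -
  have "\<bar>k 0\<bar> > 0" using assms(2) by simp
  from LIM_D[OF assms(1)[unfolded isCont_def] this]
  obtain d where d0: "d > 0" and d: "\<And>x. x \<noteq> 0 \<Longrightarrow> norm (x - 0) < d \<Longrightarrow> norm (k x - k 0) < \<bar>k 0\<bar>"
    by blast
  have pe: "(d/2)^e > 0" using d0 by simp
  have "(d/2)^e * k (d/2) \<ge> 0" using assms(3)[of "d/2"] d0 by simp
  hence p1: "k (d/2) \<ge> 0" using pe by (simp add: zero_le_mult_iff)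
  have "\<bar>k (d/2) - k 0\<bar> < \<bar>k 0\<bar>" using d[of "d/2"] d0 by simp
  hence k0: "k 0 > 0" using p1 by linarith
  have "\<bar>k (-d/2) - k 0\<bar> < \<bar>k 0\<bar>" using d[of "-d/2"] d0 by simp
  hence km: "k (-d/2) > 0" using k0 by linarith
  have "(-d/2)^e * k (-d/2) \<ge> 0" using assms(3)[of "-d/2"] d0 by simp
  hence "(-d/2)^e \<ge> 0" using km by (simp add: zero_le_mult_iff)
  hence "even e" using d0 by (simp add: zero_le_power_eq)
  with k0 show ?thesis by simp
qed
lemma D: fixes A1 A2 a b a' b' :: nat
  assumes "A1 * a + A2 * b = A1 * a' + A2 * b'" "a' \<le> a" "coprime A1 A2" "A2 \<ge> 1"
  shows "A2 * ((a - a') div A2) = a - a' \<and> b' = b + A1 * ((a-a') div A2)"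
proof -
  have "A1 * (a - a') + A1 * a' = A1 * a" using assms(2) by (simp add: diff_mult_distrib2)
  hence h: "A1 * (a - a') + A2 * b = A2 * b'" using assms(1) by linarith
  hence "A2 * b \<le> A2 * b'" by linarith
  hence bb: "b \<le> b'" using assms(4) by simp
  have e: "A1 * (a - a') = A2 * (b' - b)" using h bb by (simp add: diff_mult_distrib2)
  have "A2 dvd A1 * (a - a')" using e by simp
  hence "A2 dvd (a - a')" using assms(3) by (simp add: coprime_commute coprime_dvd_mult_right_iff)
  then obtain k where k: "a - a' = A2 * k" by blast
  have kk: "(a - a') div A2 = k" using k assms(4) by simp
  have "A2 * (A1 * k) = A2 * (b' - b)" using e k by (simp add: ac_simps)
  hence "A1 * k = b' - b" using assms(4) by simp
  thus ?thesis using kk k bb by simp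
qed

theorem mainTheorem1:
  fixes A1 A2 B s :: nat and a :: "nat \<Rightarrow> real" and \<alpha> \<beta> :: "nat \<Rightarrow> nat"
  assumes "A1 \<ge> 1" and "A2 \<ge> 1" and "coprime A1 A2"
    and "s \<ge> 2"
    and "\<And>i. 1 \<le> i \<Longrightarrow> i \<le> s \<Longrightarrow> a i \<noteq> 0"
    and "B \<ge> 1"
    and "\<And>i. 1 \<le> i \<Longrightarrow> i \<le> s \<Longrightarrow> A1 * \<alpha> i + A2 * \<beta> i = B"
    and "\<And>i j. 1 \<le> i \<Longrightarrow> i < j \<Longrightarrow> j \<le> s \<Longrightarrow> \<alpha> j < \<alpha> i"
  shows "(\<forall>x y. form_eval s a \<alpha> \<beta> x y \<ge> 0) \<longleftrightarrow>
           ((a 1 > 0 \<and> a s > 0 \<and> even (\<alpha> 1) \<and> even (\<beta> 1) \<and> even (\<alpha> s) \<and> even (\<beta> s))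
            \<and> (\<forall>u::real. poly (char_poly A2 s a \<alpha>) u \<ge> 0))"
proof -
  define g where "g = char_poly A2 s a \<alpha>"
  define G where "G = (\<Sum>i=1..s. monom (a i) ((\<alpha> i - \<alpha> s) div A2))"
  define p where "p = form_eval s a \<alpha> \<beta>"
  have al: "\<alpha> i \<le> \<alpha> 1" if "1 \<le> i" "i \<le> s" for i
    using assms(8)[of 1 i] that by (cases "i = 1") auto
  have als: "\<alpha> s \<le> \<alpha> i" if "1 \<le> i" "i \<le> s" for i
    using assms(8)[of i s] that by (cases "i = s") auto
  have B1: "A2 * char_exp A2 \<alpha> i = \<alpha> 1 - \<alpha> i \<and> \<beta> i = \<beta> 1 + A1 * char_exp A2 \<alpha> i"
    if "1 \<le> i" "i \<le> s" for i
    using D[of A1 "\<alpha> 1" A2 "\<beta> 1" "\<alpha> i" "\<beta> i"] assms(7)[of 1] assms(7)[of i] that assms(2,3,4) al[OF that]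
    unfolding char_exp_def by auto
  have B2: "A2 * ((\<alpha> i - \<alpha> s) div A2) = \<alpha> i - \<alpha> s \<and> \<beta> s = \<beta> i + A1 * ((\<alpha> i - \<alpha> s) div A2)"
    if "1 \<le> i" "i \<le> s" for i
    using D[of A1 "\<alpha> i" A2 "\<beta> i" "\<alpha> s" "\<beta> s"] assms(7)[of s] assms(7)[of i] that assms(2,3,4) als[OF that]
    by auto
  have id1: "p x y = x ^ \<alpha> 1 * y ^ \<beta> 1 * poly g (y ^ A1 / x ^ A2)" if "x \<noteq> 0" for x y
    unfolding p_def g_def form_eval_def char_poly_def poly_sum poly_monom sum_distrib_left
  proof (rule sum.cong)
    fix i assume i: "i \<in> {1..s}"
    have "x ^ \<alpha> i * y ^ \<beta> i = x ^ \<alpha> 1 * y ^ \<beta> 1 * (y ^ A1 / x ^ A2) ^ char_exp A2 \<alpha> i"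
      using B1[of i] al[of i] i that by (intro T) auto
    thus "a i * x ^ \<alpha> i * y ^ \<beta> i = x ^ \<alpha> 1 * y ^ \<beta> 1 * (a i * (y ^ A1 / x ^ A2) ^ char_exp A2 \<alpha> i)"
      by (simp add: algebra_simps)
  qed simp
  have id2: "p x y = x ^ \<alpha> s * y ^ \<beta> s * poly G (x ^ A2 / y ^ A1)" if "y \<noteq> 0" for x y
    unfolding p_def G_def form_eval_def poly_sum poly_monom sum_distrib_left
  proof (rule sum.cong)
    fix i assume i: "i \<in> {1..s}"
    have "y ^ \<beta> i * x ^ \<alpha> i = y ^ \<beta> s * x ^ \<alpha> s * (x ^ A2 / y ^ A1) ^ ((\<alpha> i - \<alpha> s) div A2)"
      using B2[of i] als[of i] i that by (intro T) auto
    thus "a i * x ^ \<alpha> i * y ^ \<beta> i = x ^ \<alpha> s * y ^ \<beta> s * (a i * (x ^ A2 / y ^ A1) ^ ((\<alpha> i - \<alpha> s) div A2))"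
      by (simp add: algebra_simps)
  qed simp
  have g0: "poly g 0 = a 1"
  proof -
    have "poly g 0 = (\<Sum>i\<in>{1..s}. a i * 0 ^ char_exp A2 \<alpha> i)"
      unfolding g_def char_poly_def poly_sum poly_monom by simp
    also have "\<dots> = a 1 * 0 ^ char_exp A2 \<alpha> 1 + (\<Sum>i\<in>{1..s} - {1}. a i * 0 ^ char_exp A2 \<alpha> i)"
      using assms(4) by (intro sum.remove) auto
    also have "(\<Sum>i\<in>{1..s} - {1}. a i * (0::real) ^ char_exp A2 \<alpha> i) = 0"
    proof (rule sum.neutral, intro ballI)
      fix i assume i: "i \<in> {1..s} - {1}"
      have "\<alpha> i < \<alpha> 1" using assms(8)[of 1 i] i by auto
      moreover have "A2 * char_exp A2 \<alpha> i = \<alpha> 1 - \<alpha> i" using B1[of i] i by auto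
      ultimately have "char_exp A2 \<alpha> i \<noteq> 0" by (metis mult_0_right zero_less_diff less_irrefl)
      thus "a i * (0::real) ^ char_exp A2 \<alpha> i = 0" by simp
    qed
    finally show ?thesis by (simp add: char_exp_def)
  qed
  have G0: "poly G 0 = a s"
  proof -
    have "poly G 0 = (\<Sum>i\<in>{1..s}. a i * 0 ^ ((\<alpha> i - \<alpha> s) div A2))"
      unfolding G_def poly_sum poly_monom by simp
    also have "\<dots> = a s * 0 ^ ((\<alpha> s - \<alpha> s) div A2) + (\<Sum>i\<in>{1..s} - {s}. a i * 0 ^ ((\<alpha> i - \<alpha> s) div A2))"
      using assms(4) by (intro sum.remove) auto
    also have "(\<Sum>i\<in>{1..s} - {s}. a i * (0::real) ^ ((\<alpha> i - \<alpha> s) div A2)) = 0"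
    proof (rule sum.neutral, intro ballI)
      fix i assume i: "i \<in> {1..s} - {s}"
      have "\<alpha> s < \<alpha> i" using assms(8)[of i s] i by auto
      moreover have "A2 * ((\<alpha> i - \<alpha> s) div A2) = \<alpha> i - \<alpha> s" using B2[of i] i by auto
      ultimately have "(\<alpha> i - \<alpha> s) div A2 \<noteq> 0" by (metis mult_0_right zero_less_diff less_irrefl)
      thus "a i * (0::real) ^ ((\<alpha> i - \<alpha> s) div A2) = 0" by simp
    qed
    finally show ?thesis by simp
  qed
  have p0: "p 0 y = a s * 0 ^ \<alpha> s * y ^ \<beta> s" for y
  proof -
    have "p 0 y = (\<Sum>i\<in>{1..s}. a i * 0 ^ \<alpha> i * y ^ \<beta> i)"
      unfolding p_def form_eval_def by simp
    also have "\<dots> = a s * 0 ^ \<alpha> s * y ^ \<beta> s + (\<Sum>i\<in>{1..s} - {s}. a i * 0 ^ \<alpha> i * y ^ \<beta> i)"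
      using assms(4) by (intro sum.remove) auto
    also have "(\<Sum>i\<in>{1..s} - {s}. a i * (0::real) ^ \<alpha> i * y ^ \<beta> i) = 0"
    proof (rule sum.neutral, intro ballI)
      fix i assume i: "i \<in> {1..s} - {s}"
      have "\<alpha> s < \<alpha> i" using assms(8)[of i s] i by auto
      hence "\<alpha> i \<noteq> 0" by simp
      thus "a i * (0::real) ^ \<alpha> i * y ^ \<beta> i = 0" by simp
    qed
    finally show ?thesis by simp
  qed
  have a1: "a 1 \<noteq> 0" and as: "a s \<noteq> 0" using assms(5)[of 1] assms(5)[of s] assms(4) by auto
  have inv: "x ^ (2 * n) * ((1 / x) ^ n * c) = x ^ n * c" if "x \<noteq> 0" for x :: real and n c
    proof -
    have "x ^ (2 * n) = x ^ n * x ^ n" by (simp add: mult_2 power_add)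
    thus ?thesis using that by (simp add: power_one_over field_simps)
  qed
  show ?thesis
    unfolding p_def[symmetric] g_def[symmetric]
  proof
    assume P: "\<forall>x y. p x y \<ge> 0"
    have c1: "poly g (0 ^ A1) > 0 \<and> even (\<beta> 1)"
    proof (rule SL[where k = "\<lambda>y. poly g (y ^ A1)"])
      show "isCont (\<lambda>y. poly g (y ^ A1)) 0" by (intro continuous_poly continuous_intros)
      show "poly g (0 ^ A1) \<noteq> 0" using g0 a1 assms(1) by (simp add: power_0_left)
      fix y :: real assume "y \<noteq> 0"
      show "y ^ \<beta> 1 * poly g (y ^ A1) \<ge> 0" using P[rule_format, of 1 y] id1[of 1 y] by simp
    qed
    have c2: "poly g (0 ^ A2) > 0 \<and> even (\<alpha> 1)"
    proof (rule SL[where k = "\<lambda>y. poly g (y ^ A2)"])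
      show "isCont (\<lambda>y. poly g (y ^ A2)) 0" by (intro continuous_poly continuous_intros)
      show "poly g (0 ^ A2) \<noteq> 0" using g0 a1 assms(2) by (simp add: power_0_left)
      fix x :: real assume x: "x \<noteq> 0"
      have "p (1/x) 1 = (1/x) ^ \<alpha> 1 * poly g (x ^ A2)" using id1[of "1/x" 1] x
        by (simp add: power_one_over)
      have "x ^ \<alpha> 1 * poly g (x ^ A2) = x ^ (2 * \<alpha> 1) * p (1/x) 1" unfolding \<open>p (1/x) 1 = _\<close> by (rule inv[OF x, symmetric])
      also have "\<dots> \<ge> 0" using P by (simp add: zero_le_mult_iff)
      finally show "x ^ \<alpha> 1 * poly g (x ^ A2) \<ge> 0" .
    qed
    have c3: "poly G (0 ^ A2) > 0 \<and> even (\<alpha> s)"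
    proof (rule SL[where k = "\<lambda>y. poly G (y ^ A2)"])
      show "isCont (\<lambda>y. poly G (y ^ A2)) 0" by (intro continuous_poly continuous_intros)
      show "poly G (0 ^ A2) \<noteq> 0" using G0 as assms(2) by (simp add: power_0_left)
      fix x :: real assume "x \<noteq> 0"
      show "x ^ \<alpha> s * poly G (x ^ A2) \<ge> 0" using P[rule_format, of x 1] id2[where x=x and y=1] by simp
    qed
    have c4: "poly G (0 ^ A1) > 0 \<and> even (\<beta> s)"
    proof (rule SL[where k = "\<lambda>y. poly G (y ^ A1)"])
      show "isCont (\<lambda>y. poly G (y ^ A1)) 0" by (intro continuous_poly continuous_intros)
      show "poly G (0 ^ A1) \<noteq> 0" using G0 as assms(1) by (simp add: power_0_left)
      fix y :: real assume y: "y \<noteq> 0"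
      have "p 1 (1/y) = (1/y) ^ \<beta> s * poly G (y ^ A1)" using id2[where x=1 and y="1/y"] y
        by (simp add: power_one_over)
      have "y ^ \<beta> s * poly G (y ^ A1) = y ^ (2 * \<beta> s) * p 1 (1/y)" unfolding \<open>p 1 (1/y) = _\<close> by (rule inv[OF y, symmetric])
      also have "\<dots> \<ge> 0" using P by (simp add: zero_le_mult_iff)
      finally show "y ^ \<beta> s * poly G (y ^ A1) \<ge> 0" .
    qed
    have a1p: "a 1 > 0" using c1 g0 assms(1) by (simp add: power_0_left)
    have asp: "a s > 0" using c3 G0 assms(2) by (simp add: power_0_left)
    have gnn: "poly g u \<ge> 0" for u
    proof (cases "u = 0")
      case True thus ?thesis using g0 a1p by simp
    next
      case u: False
      show ?thesis
      proof (cases "odd A1")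
        case True
        define y where "y = root A1 u"
        have yu: "y ^ A1 = u" unfolding y_def using True by (rule odd_real_root_pow)
        hence y0: "y \<noteq> 0" using u assms(1) by (auto simp: power_0_left)
        have "0 \<le> p 1 y" using P by simp
        also have "p 1 y = y ^ \<beta> 1 * poly g u" using id1[of 1 y] yu by simp
        finally have "0 \<le> y ^ \<beta> 1 * poly g u" .
        moreover have "y ^ \<beta> 1 > 0" using c1 y0 by (simp add: zero_less_power_eq)
        ultimately show ?thesis by (simp add: zero_le_mult_iff)
      next
        case False
        have "odd A2"
        proof
          assume "even A2"
          hence "2 = (1::nat)" using False assms(3) coprime_common_divisor_nat[of A1 A2 2] by auto
          thus False by simp
        qed
        define x where "x = root A2 (1/u)"
        have xu: "x ^ A2 = 1/u" unfolding x_def using \<open>odd A2\<close> by (rule odd_real_root_pow)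
        hence x0: "x \<noteq> 0" using u assms(2) by (auto simp: power_0_left)
        have "0 \<le> p x 1" using P by simp
        also have "p x 1 = x ^ \<alpha> 1 * poly g u" using id1[of x 1] xu x0 by simp
        finally have "0 \<le> x ^ \<alpha> 1 * poly g u" .
        moreover have "x ^ \<alpha> 1 > 0" using c2 x0 by (simp add: zero_less_power_eq)
        ultimately show ?thesis by (simp add: zero_le_mult_iff)
      qed
    qed
    show "(a 1 > 0 \<and> a s > 0 \<and> even (\<alpha> 1) \<and> even (\<beta> 1) \<and> even (\<alpha> s) \<and> even (\<beta> s))
            \<and> (\<forall>u::real. poly g u \<ge> 0)"
      using a1p asp c1 c2 c3 c4 gnn by blast
  next
    assume H: "(a 1 > 0 \<and> a s > 0 \<and> even (\<alpha> 1) \<and> even (\<beta> 1) \<and> even (\<alpha> s) \<and> even (\<beta> s))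
            \<and> (\<forall>u::real. poly g u \<ge> 0)"
    show "\<forall>x y. p x y \<ge> 0"
    proof (intro allI)
      fix x y :: real
      show "p x y \<ge> 0"
      proof (cases "x = 0")
        case True
        have "a s * 0 ^ \<alpha> s * y ^ \<beta> s \<ge> (0::real)"
          using H by (intro mult_nonneg_nonneg) (auto simp: zero_le_power_eq)
        thus ?thesis using p0 True by simp
      next
        case False
        have "x ^ \<alpha> 1 * y ^ \<beta> 1 * poly g (y ^ A1 / x ^ A2) \<ge> 0"
          using H by (intro mult_nonneg_nonneg) (auto simp: zero_le_power_eq)
        thus ?thesis using id1[OF False] by simp
      qed
    qed
  qed
qed

end
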